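(* Let $G$ be a finite group and $T$ a $G$-transfer system. If $T'$ is a saturated $G$-transfer system containing $T$, then $(T,T')$ is a compatible pair.
   Context: A $G$-transfer system is a partial order $\to$ on the set of subgroups of $G$ such that: $K\to H$ implies $K\le H$; $H\to H$ for all $H$; $L\to K$ and $K\to H$ imply $L\to H$; $K\to H$ implies $K\cap L\to H\cap L$ for every $L\le G$; $K\to H$ implies $gKg^{-1}\to gHg^{-1}$ for all $g\in G$. A transfer system is saturated if whenever $L\le K\le H$ and $L\to H$ is in it, then $K\to H$ is in it. A pair $(T,T')$ of $G$-transfer systems is compatible if (1) $T\subseteq T'$, and (2) for all subgroups $A,B,C$ with $B,C\le A$: if $B\to A$ is in $T$ and $B\cap C\to B$ is in $T'$, then $C\to A$ is in $T'$. *)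

theory Defs
  imports "HOL-Algebra.Group"
begin

text \<open>A G-transfer system is encoded as a set T of pairs (K, H) of subgroups of G,
  where (K, H) in T means K \<rightarrow> H.\<close>

definition conj_subgroup :: "('a, 'b) monoid_scheme \<Rightarrow> 'a \<Rightarrow> 'a set \<Rightarrow> 'a set" where
  "conj_subgroup G g K = (\<lambda>k. g \<otimes>\<^bsub>G\<^esub> k \<otimes>\<^bsub>G\<^esub> inv\<^bsub>G\<^esub> g) ` K"

definition transfer_system :: "('a, 'b) monoid_scheme \<Rightarrow> ('a set \<times> 'a set) set \<Rightarrow> bool" where
  "transfer_system G T \<longleftrightarrow>
     (\<forall>K H. (K, H) \<in> T \<longrightarrow> subgroup K G \<and> subgroup H G) \<and>
     \<comment> \<open>partial order on the set of subgroups\<close>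
     (\<forall>H. subgroup H G \<longrightarrow> (H, H) \<in> T) \<and>
     (\<forall>L K H. (L, K) \<in> T \<longrightarrow> (K, H) \<in> T \<longrightarrow> (L, H) \<in> T) \<and>
     (\<forall>K H. (K, H) \<in> T \<longrightarrow> (H, K) \<in> T \<longrightarrow> K = H) \<and>
     \<comment> \<open>refines inclusion\<close>
     (\<forall>K H. (K, H) \<in> T \<longrightarrow> K \<subseteq> H) \<and>
     \<comment> \<open>closed under restriction\<close>
     (\<forall>K H L. (K, H) \<in> T \<longrightarrow> subgroup L G \<longrightarrow> (K \<inter> L, H \<inter> L) \<in> T) \<and>
     \<comment> \<open>closed under conjugation\<close>
     (\<forall>K H g. (K, H) \<in> T \<longrightarrow> g \<in> carrier G \<longrightarrow>
        (conj_subgroup G g K, conj_subgroup G g H) \<in> T)"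

definition saturated :: "('a, 'b) monoid_scheme \<Rightarrow> ('a set \<times> 'a set) set \<Rightarrow> bool" where
  "saturated G T \<longleftrightarrow>
     (\<forall>L K H. subgroup L G \<longrightarrow> subgroup K G \<longrightarrow> subgroup H G \<longrightarrow>
        L \<subseteq> K \<longrightarrow> K \<subseteq> H \<longrightarrow> (L, H) \<in> T \<longrightarrow> (K, H) \<in> T)"

definition compatible_pair ::
  "('a, 'b) monoid_scheme \<Rightarrow> ('a set \<times> 'a set) set \<Rightarrow> ('a set \<times> 'a set) set \<Rightarrow> bool" where
  "compatible_pair G T T' \<longleftrightarrow>
     T \<subseteq> T' \<and>
     (\<forall>A B C. subgroup A G \<longrightarrow> subgroup B G \<longrightarrow> subgroup C G \<longrightarrow>
        B \<subseteq> A \<longrightarrow> C \<subseteq> A \<longrightarrow> (B, A) \<in> T \<longrightarrow> (B \<inter> C, B) \<in> T' \<longrightarrow> (C, A) \<in> T')"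

end

theory Submission
  imports Defs
begin

theorem mainTheorem4:
  fixes G :: "('a, 'b) monoid_scheme" and T T' :: "('a set \<times> 'a set) set"
  assumes "group G" and "finite (carrier G)"
    and "transfer_system G T"
    and "transfer_system G T'" and "saturated G T'" and "T \<subseteq> T'"
  shows "compatible_pair G T T'"
  unfolding compatible_pair_def
proof (intro conjI allI impI)
  show "T \<subseteq> T'" by fact
next
  fix A B C
  assume A: "subgroup A G" and B: "subgroup B G" and C: "subgroup C G"
    and BA: "B \<subseteq> A" and CA: "C \<subseteq> A" and t1: "(B, A) \<in> T" and t2: "(B \<inter> C, B) \<in> T'"
  have tr: "\<forall>L K H. (L, K) \<in> T' \<longrightarrow> (K, H) \<in> T' \<longrightarrow> (L, H) \<in> T'"
    using assms(4) unfolding transfer_system_def by (elim conjE)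
  have sgs: "\<forall>K H. (K, H) \<in> T' \<longrightarrow> subgroup K G \<and> subgroup H G"
    using assms(4) unfolding transfer_system_def by (elim conjE)
  have sg: "subgroup (B \<inter> C) G" using sgs t2 by simp
  have t3: "(B, A) \<in> T'" using t1 assms(6) by (rule subsetD[rotated])
  have t4: "(B \<inter> C, A) \<in> T'" using tr t2 t3 by simp
  have sat: "\<forall>L K H. subgroup L G \<longrightarrow> subgroup K G \<longrightarrow> subgroup H G \<longrightarrow>
        L \<subseteq> K \<longrightarrow> K \<subseteq> H \<longrightarrow> (L, H) \<in> T' \<longrightarrow> (K, H) \<in> T'"
    using assms(5) unfolding saturated_def .
  show "(C, A) \<in> T'"
    using sat sg C A CA t4 by (meson Int_lower2)
qed

end
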